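(* Let $A$ be a $K$-algebra and let $A[y_1;\sigma_1,d_1][y_2;\sigma_2,d_2]$ be an iterated Ore extension such that $\sigma_2(A)\subseteq A$ and $\sigma_2(y_1)=py_1+q$ for some $p\in K^*$ and $q\in A$. Then $\sigma_1\sigma_2(a)=\sigma_2\sigma_1(a)$ for all $a\in A$.
   Context: $K$ is a field, $K^*$ its group of units. For a $K$-algebra $R$, an algebra endomorphism $\sigma$ of $R$ and a $\sigma$-derivation $d$ of $R$ (a $K$-linear map with $d(ab)=\sigma(a)d(b)+d(a)b$), the Ore extension $R[x;\sigma,d]$ is the free left $R$-module with basis $\{x^i\}_{i\ge0}$ with associative multiplication extending that of $R$ and satisfying $xr=\sigma(r)x+d(r)$ for $r\in R$. An iterated Ore extension $A[y_1;\sigma_1,d_1][y_2;\sigma_2,d_2]$ is an Ore extension of $R=A[y_1;\sigma_1,d_1]$, where $\sigma_2,d_2$ are an endomorphism and a $\sigma_2$-derivation of $R$. *)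

theory Defs
  imports Main
begin

text \<open>Conventions: everything lives inside one ambient ring (a type 'r), which is the
iterated Ore extension itself (carrier UNIV).\<close>

definition field_emb :: "('k::field \<Rightarrow> 'r::ring_1) \<Rightarrow> bool" where
  "field_emb emb \<longleftrightarrow> inj emb \<and> emb 1 = 1 \<and>
     (\<forall>a b. emb (a + b) = emb a + emb b) \<and> (\<forall>a b. emb (a * b) = emb a * emb b)"

definition subring :: "'r::ring_1 set \<Rightarrow> bool" where
  "subring S \<longleftrightarrow> 0 \<in> S \<and> 1 \<in> S \<and>
     (\<forall>a\<in>S. \<forall>b\<in>S. a + b \<in> S \<and> a - b \<in> S \<and> a * b \<in> S)"

definition K_algebra :: "('k::field \<Rightarrow> 'r::ring_1) \<Rightarrow> 'r set \<Rightarrow> bool" where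
  "K_algebra emb A \<longleftrightarrow> subring A \<and> range emb \<subseteq> A \<and>
     (\<forall>c. \<forall>a\<in>A. emb c * a = a * emb c)"

definition alg_endo :: "('k::field \<Rightarrow> 'r::ring_1) \<Rightarrow> 'r set \<Rightarrow> ('r \<Rightarrow> 'r) \<Rightarrow> bool" where
  "alg_endo emb R \<sigma> \<longleftrightarrow> \<sigma> ` R \<subseteq> R \<and> \<sigma> 1 = 1 \<and>
     (\<forall>a\<in>R. \<forall>b\<in>R. \<sigma> (a + b) = \<sigma> a + \<sigma> b \<and> \<sigma> (a * b) = \<sigma> a * \<sigma> b) \<and>
     (\<forall>c. \<forall>a\<in>R. \<sigma> (emb c * a) = emb c * \<sigma> a)"

definition sigma_derivation :: "('k::field \<Rightarrow> 'r::ring_1) \<Rightarrow> 'r set \<Rightarrow> ('r \<Rightarrow> 'r) \<Rightarrow> ('r \<Rightarrow> 'r) \<Rightarrow> bool" where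
  "sigma_derivation emb R \<sigma> d \<longleftrightarrow> d ` R \<subseteq> R \<and>
     (\<forall>a\<in>R. \<forall>b\<in>R. d (a + b) = d a + d b \<and> d (a * b) = \<sigma> a * d b + d a * b) \<and>
     (\<forall>c. \<forall>a\<in>R. d (emb c * a) = emb c * d a)"

definition ore_ext :: "('k::field \<Rightarrow> 'r::ring_1) \<Rightarrow> 'r set \<Rightarrow> ('r \<Rightarrow> 'r) \<Rightarrow> ('r \<Rightarrow> 'r) \<Rightarrow> 'r \<Rightarrow> 'r set \<Rightarrow> bool" where
  "ore_ext emb R \<sigma> d x S \<longleftrightarrow>
     subring R \<and> subring S \<and> R \<subseteq> S \<and> x \<in> S \<and>
     alg_endo emb R \<sigma> \<and> sigma_derivation emb R \<sigma> d \<and>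
     (\<forall>r\<in>R. x * r = \<sigma> r * x + d r) \<and>
     (\<forall>s\<in>S. \<exists>n c. (\<forall>i<n. c i \<in> R) \<and> s = (\<Sum>i<n. c i * x ^ i)) \<and>
     (\<forall>n c. (\<forall>i<n. c i \<in> R) \<longrightarrow> (\<Sum>i<n. c i * x ^ i) = 0 \<longrightarrow> (\<forall>i<n. c i = 0))"

end

theory Submission
  imports Defs
begin

theorem lemma2p1:
  fixes emb :: "'k::field \<Rightarrow> 'r::ring_1"
    and A R :: "'r set" and \<sigma>1 d1 \<sigma>2 d2 :: "'r \<Rightarrow> 'r"
    and y1 y2 q :: 'r and p :: 'k
  assumes "field_emb emb"
    and "K_algebra emb A"
    and "ore_ext emb A \<sigma>1 d1 y1 R"
    and "ore_ext emb R \<sigma>2 d2 y2 UNIV"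
    and "\<sigma>2 ` A \<subseteq> A"
    and "p \<noteq> 0" and "q \<in> A"
    and "\<sigma>2 y1 = emb p * y1 + q"
  shows "\<forall>a\<in>A. \<sigma>1 (\<sigma>2 a) = \<sigma>2 (\<sigma>1 a)"
proof
  fix a assume aA: "a \<in> A"
  have fe: "emb 1 = 1" "\<And>x y. emb (x*y) = emb x * emb y" using assms(1) unfolding field_emb_def by auto
  have subA: "subring A" and embA: "\<And>c. emb c \<in> A" and cen: "\<And>c x. x \<in> A \<Longrightarrow> emb c * x = x * emb c"
    using assms(2) unfolding K_algebra_def by auto
  have AR: "A \<subseteq> R" and y1R: "y1 \<in> R" and s1: "\<sigma>1 ` A \<subseteq> A" and dd1: "d1 ` A \<subseteq> A"
    and comm1: "\<forall>r\<in>A. y1 * r = \<sigma>1 r * y1 + d1 r"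
    and uniq: "\<forall>n c. (\<forall>i<n. c i \<in> A) \<longrightarrow> (\<Sum>i<n. c i * y1 ^ i) = 0 \<longrightarrow> (\<forall>i<n. c i = 0)"
    using assms(3) unfolding ore_ext_def alg_endo_def sigma_derivation_def by auto
  have hom2: "\<forall>a\<in>R. \<forall>b\<in>R. \<sigma>2 (a + b) = \<sigma>2 a + \<sigma>2 b \<and> \<sigma>2 (a * b) = \<sigma>2 a * \<sigma>2 b"
    using assms(4) unfolding ore_ext_def alg_endo_def by auto
  define b where "b = \<sigma>2 a"
  define s where "s = \<sigma>1 a"
  define t where "t = d1 a"
  define e where "e = emb p"
  have bA: "b \<in> A" using assms(5) aA b_def by auto
  have sA: "s \<in> A" using s1 aA s_def by auto
  have tA: "t \<in> A" using dd1 aA t_def by auto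
  have s2A: "\<sigma>2 s \<in> A" "\<sigma>2 t \<in> A" using assms(5) sA tA by auto
  have eA: "e \<in> A" using embA e_def by auto
  have sb: "\<sigma>1 b \<in> A" "d1 b \<in> A" using s1 dd1 bA by auto
  have "y1 * a = s * y1 + t" using comm1 aA s_def t_def by auto
  hence "\<sigma>2 (y1 * a) = \<sigma>2 (s * y1 + t)" by simp
  moreover have "\<sigma>2 (y1 * a) = (e * y1 + q) * b"
    using hom2 y1R aA AR assms(8) b_def e_def by auto
  moreover have "\<sigma>2 (s * y1 + t) = \<sigma>2 s * (e * y1 + q) + \<sigma>2 t"
  proof -
    have "s * y1 \<in> R" using subA sA AR y1R assms(3) unfolding ore_ext_def subring_def by blast
    moreover have "t \<in> R" "s \<in> R" using tA sA AR by auto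
    ultimately have "\<sigma>2 (s * y1 + t) = \<sigma>2 s * \<sigma>2 y1 + \<sigma>2 t" using hom2 y1R by simp
    thus ?thesis using assms(8) e_def by simp
  qed
  moreover have "(e * y1 + q) * b = e * (\<sigma>1 b * y1 + d1 b) + q * b"
    using comm1 bA by (simp add: algebra_simps mult.assoc)
  ultimately have eq: "(e * \<sigma>1 b - \<sigma>2 s * e) * y1 + (e * d1 b + q * b - \<sigma>2 s * q - \<sigma>2 t) = 0"
    by (simp add: algebra_simps mult.assoc)
  define c where "c = (\<lambda>i::nat. if i = 0 then e * d1 b + q * b - \<sigma>2 s * q - \<sigma>2 t else e * \<sigma>1 b - \<sigma>2 s * e)"
  have cA: "\<forall>i<2. c i \<in> A" using subA eA sb s2A assms(7) bA unfolding subring_def c_def by auto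
  have "(\<Sum>i<2. c i * y1 ^ i) = 0" using eq by (simp add: c_def numeral_2_eq_2 add.commute)
  hence "c 1 = 0" using uniq cA by auto
  hence "e * \<sigma>1 b = \<sigma>2 s * e" by (simp add: c_def)
  also have "\<dots> = e * \<sigma>2 s" using cen s2A e_def by auto
  finally have "emb (inverse p) * (e * \<sigma>1 b) = emb (inverse p) * (e * \<sigma>2 s)" by simp
  hence "\<sigma>1 b = \<sigma>2 s" using assms(6) fe e_def by (simp add: mult.assoc[symmetric] fe(2)[symmetric])
  thus "\<sigma>1 (\<sigma>2 a) = \<sigma>2 (\<sigma>1 a)" using b_def s_def by simp
qed

end
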